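(* Let $s\ge1$ be an integer and let $(G,Z)$ be a monic plantation. Then there exist $X\subseteq Z$ and $Y\subseteq V(G)\setminus Z$ with $|X|<s$ and $|Y|<2s\cdot s!$ such that exploding the vertices in $X$ and deleting the (remaining) vertices in $Y$ yields a selfless plantation.
   Context: Graphs are finite and simple. Two subsets of $V(G)$ are anticomplete if they are disjoint and no edge joins them; subgraphs are anticomplete if their vertex sets are. $G$ is $s\mathcal{O}$-free if no $s$ cycles of $G$ are pairwise vertex-disjoint and pairwise anticomplete. A set $Z\subseteq V(G)$ is cycle-hitting if every cycle of $G$ has a vertex in $Z$. A plantation is a pair $(G,Z)$ where $G$ is an $s\mathcal{O}$-free graph and $Z\subseteq V(G)$ is cycle-hitting. Let $F=G\setminus Z$ (a forest) and $N$ the set of vertices of $V(G)\setminus Z$ with a neighbour in $Z$. $(G,Z)$ is monic if $Z$ is stable and every vertex of $N$ has exactly one neighbour in $Z$. A transition of $(G,Z)$ is a path of $F$ of length at least one with both ends in $N$ and no internal vertex in $N$; a vertex $z\in Z$ adjacent to an end of a transition $P$ is a foot of $P$. A self-transition is a transition with only one foot; $(G,Z)$ is selfless if it has no self-transition. Deleting a vertex $v\in V(G)\setminus Z$ produces the plantation $(G\setminus\{v\},Z)$. Exploding a vertex $v\in Z$ produces the plantation $(G',Z\setminus\{v\})$, where $G'$ is obtained from $G$ by deleting $v$ and all its neighbours in $V(G)\setminus Z$. *)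

theory Defs
  imports Main
begin

definition graph :: "'a set \<Rightarrow> ('a \<Rightarrow> 'a \<Rightarrow> bool) \<Rightarrow> bool" where
  "graph V E \<longleftrightarrow> finite V \<and> (\<forall>u v. E u v \<longrightarrow> E v u) \<and> (\<forall>v. \<not> E v v)
     \<and> (\<forall>u v. E u v \<longrightarrow> u \<in> V \<and> v \<in> V)"

definition induced :: "('a \<Rightarrow> 'a \<Rightarrow> bool) \<Rightarrow> 'a set \<Rightarrow> 'a \<Rightarrow> 'a \<Rightarrow> bool" where
  "induced E W = (\<lambda>u v. E u v \<and> u \<in> W \<and> v \<in> W)"

definition is_cycle :: "'a set \<Rightarrow> ('a \<Rightarrow> 'a \<Rightarrow> bool) \<Rightarrow> 'a list \<Rightarrow> bool" where
  "is_cycle V E C \<longleftrightarrow> length C \<ge> 3 \<and> distinct C \<and> set C \<subseteq> V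
     \<and> (\<forall>i. Suc i < length C \<longrightarrow> E (C ! i) (C ! Suc i)) \<and> E (last C) (hd C)"

definition is_path :: "'a set \<Rightarrow> ('a \<Rightarrow> 'a \<Rightarrow> bool) \<Rightarrow> 'a list \<Rightarrow> bool" where
  "is_path V E P \<longleftrightarrow> P \<noteq> [] \<and> distinct P \<and> set P \<subseteq> V
     \<and> (\<forall>i. Suc i < length P \<longrightarrow> E (P ! i) (P ! Suc i))"

definition anticomplete :: "('a \<Rightarrow> 'a \<Rightarrow> bool) \<Rightarrow> 'a set \<Rightarrow> 'a set \<Rightarrow> bool" where
  "anticomplete E A B \<longleftrightarrow> A \<inter> B = {} \<and> (\<forall>a\<in>A. \<forall>b\<in>B. \<not> E a b)"

definition sO_free :: "nat \<Rightarrow> 'a set \<Rightarrow> ('a \<Rightarrow> 'a \<Rightarrow> bool) \<Rightarrow> bool" where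
  "sO_free s V E \<longleftrightarrow> \<not> (\<exists>Cs. length Cs = s \<and> (\<forall>C\<in>set Cs. is_cycle V E C)
     \<and> (\<forall>i j. i < s \<and> j < s \<and> i \<noteq> j \<longrightarrow> anticomplete E (set (Cs ! i)) (set (Cs ! j))))"

definition cycle_hitting :: "'a set \<Rightarrow> ('a \<Rightarrow> 'a \<Rightarrow> bool) \<Rightarrow> 'a set \<Rightarrow> bool" where
  "cycle_hitting V E Z \<longleftrightarrow> Z \<subseteq> V \<and> (\<forall>C. is_cycle V E C \<longrightarrow> set C \<inter> Z \<noteq> {})"

definition plantation :: "nat \<Rightarrow> 'a set \<Rightarrow> ('a \<Rightarrow> 'a \<Rightarrow> bool) \<Rightarrow> 'a set \<Rightarrow> bool" where
  "plantation s V E Z \<longleftrightarrow> graph V E \<and> sO_free s V E \<and> cycle_hitting V E Z"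

definition attach :: "'a set \<Rightarrow> ('a \<Rightarrow> 'a \<Rightarrow> bool) \<Rightarrow> 'a set \<Rightarrow> 'a set" where
  "attach V E Z = {v \<in> V - Z. \<exists>z\<in>Z. E v z}"

definition monic :: "'a set \<Rightarrow> ('a \<Rightarrow> 'a \<Rightarrow> bool) \<Rightarrow> 'a set \<Rightarrow> bool" where
  "monic V E Z \<longleftrightarrow> (\<forall>u\<in>Z. \<forall>v\<in>Z. \<not> E u v)
     \<and> (\<forall>v\<in>attach V E Z. \<exists>!z. z \<in> Z \<and> E v z)"

definition transition :: "'a set \<Rightarrow> ('a \<Rightarrow> 'a \<Rightarrow> bool) \<Rightarrow> 'a set \<Rightarrow> 'a list \<Rightarrow> bool" where
  "transition V E Z P \<longleftrightarrow> is_path (V - Z) (induced E (V - Z)) P \<and> length P \<ge> 2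
     \<and> hd P \<in> attach V E Z \<and> last P \<in> attach V E Z
     \<and> (\<forall>i. 0 < i \<and> Suc i < length P \<longrightarrow> P ! i \<notin> attach V E Z)"

definition feet :: "('a \<Rightarrow> 'a \<Rightarrow> bool) \<Rightarrow> 'a set \<Rightarrow> 'a list \<Rightarrow> 'a set" where
  "feet E Z P = {z \<in> Z. E z (hd P) \<or> E z (last P)}"

definition self_transition :: "'a set \<Rightarrow> ('a \<Rightarrow> 'a \<Rightarrow> bool) \<Rightarrow> 'a set \<Rightarrow> 'a list \<Rightarrow> bool" where
  "self_transition V E Z P \<longleftrightarrow> transition V E Z P \<and> card (feet E Z P) = 1"

definition selfless :: "'a set \<Rightarrow> ('a \<Rightarrow> 'a \<Rightarrow> bool) \<Rightarrow> 'a set \<Rightarrow> bool" where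
  "selfless V E Z \<longleftrightarrow> \<not> (\<exists>P. self_transition V E Z P)"

definition explode_delete :: "'a set \<Rightarrow> ('a \<Rightarrow> 'a \<Rightarrow> bool) \<Rightarrow> 'a set \<Rightarrow> 'a set \<Rightarrow> 'a set \<Rightarrow> 'a set" where
  "explode_delete V E Z X Y = V - X - {v \<in> V - Z. \<exists>x\<in>X. E x v} - Y"

end

theory Submission
  imports Defs
begin


lemma path_cons:
  assumes "is_path W F Q" "x \<in> W" "x \<notin> set Q" "F x (hd Q)"
  shows "is_path W F (x # Q)"
  using assms unfolding is_path_def
  by (auto simp: nth_Cons hd_conv_nth split: nat.splits)

lemma path_length_le:
  assumes "finite W" "is_path W F Q" shows "length Q \<le> card W"
  using assms unfolding is_path_def
  by (metis card_mono distinct_card)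

lemma leaf_exists:
  assumes fin: "finite W" and ne: "W \<noteq> {}"
    and sym: "\<forall>u v. F u v \<longrightarrow> F v u" and irr: "\<forall>v. \<not> F v v"
    and inW: "\<forall>u v. F u v \<longrightarrow> u \<in> W \<and> v \<in> W"
    and acyc: "\<not> (\<exists>C. is_cycle W F C)"
  shows "\<exists>l\<in>W. \<forall>a b. F l a \<and> F l b \<longrightarrow> a = b"
proof -
  obtain w where w: "w \<in> W" using ne by auto
  have "is_path W F [w]" using w unfolding is_path_def by auto
  moreover have "\<forall>y. is_path W F y \<longrightarrow> length y < card W + 1"
    using path_length_le[OF fin] by (simp add: le_imp_less_Suc)
  ultimately obtain Q where Q: "is_path W F Q" and maxQ: "\<forall>y. is_path W F y \<longrightarrow> length y \<le> length Q"
    using ex_has_greatest_nat[of "is_path W F" "[w]" length "card W + 1"] by blast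
  have Qne: "Q \<noteq> []" and Qd: "distinct Q" and QW: "set Q \<subseteq> W"
    and Qe: "\<And>i. Suc i < length Q \<Longrightarrow> F (Q ! i) (Q ! Suc i)"
    using Q unfolding is_path_def by auto
  have nb: "length Q \<ge> 2 \<and> x = Q ! 1" if "F (hd Q) x" for x
  proof -
    have xW: "x \<in> W" using inW that by blast
    have xin: "x \<in> set Q"
    proof (rule ccontr)
      assume "x \<notin> set Q"
      then have "is_path W F (x # Q)" using path_cons[OF Q xW] sym that by blast
      with maxQ show False by fastforce
    qed
    then obtain j where j: "j < length Q" "Q ! j = x" by (metis in_set_conv_nth)
    have hd0: "hd Q = Q ! 0" using Qne by (simp add: hd_conv_nth)
    have "j \<noteq> 0"
    proof
      assume "j = 0" then show False using j irr that hd0 by simp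
    qed
    moreover have "\<not> j \<ge> 2"
    proof
      assume j2: "j \<ge> 2"
      let ?C = "take (Suc j) Q"
      have "is_cycle W F ?C"
        unfolding is_cycle_def
      proof (intro conjI allI impI)
        show "3 \<le> length ?C" using j j2 by simp
        show "distinct ?C" using Qd by simp
        show "set ?C \<subseteq> W" using QW by (meson order_trans set_take_subset)
        fix i assume "Suc i < length ?C"
        then show "F (?C ! i) (?C ! Suc i)" using Qe j by simp
      next
        have "last ?C = x" using j Qne by (auto simp: last_conv_nth min_def intro: arg_cong[where f="(!) Q"])
        moreover have "hd ?C = hd Q" using Qne by simp
        ultimately show "F (last ?C) (hd ?C)" using sym that by auto
      qed
      with acyc show False by blast
    qed
    ultimately have "j = 1" by simp
    then show ?thesis using j by simp
  qed
  show ?thesis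
  proof (intro bexI[of _ "hd Q"] allI impI)
    show "hd Q \<in> W" using Qne QW by auto
    fix a b assume "F (hd Q) a \<and> F (hd Q) b"
    then show "a = b" using nb by auto
  qed
qed

lemma path_tl:
  assumes "is_path W F (a # Q)" "Q \<noteq> []" shows "is_path W F Q"
  unfolding is_path_def
proof (intro conjI allI impI)
  fix i assume "Suc i < length Q"
  then have "Suc (Suc i) < length (a # Q)" by simp
  then have "F ((a # Q) ! Suc i) ((a # Q) ! Suc (Suc i))" using assms(1) unfolding is_path_def by blast
  then show "F (Q ! i) (Q ! Suc i)" by simp
qed (use assms in \<open>auto simp: is_path_def\<close>)

lemma path_rev:
  assumes "is_path W F Q" "\<forall>u v. F u v \<longrightarrow> F v u" shows "is_path W F (rev Q)"
  unfolding is_path_def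
proof (intro conjI allI impI)
  fix i assume "Suc i < length (rev Q)"
  then have l: "Suc i < length Q" by simp
  define j where "j = length Q - Suc (Suc i)"
  have j1: "Suc j = length Q - Suc i" using l unfolding j_def by simp
  have "Suc j < length Q" using l j1 by simp
  then have "F (Q ! j) (Q ! Suc j)" using assms(1) unfolding is_path_def by blast
  then have "F (Q ! Suc j) (Q ! j)" using assms(2) by blast
  moreover have "rev Q ! i = Q ! Suc j" using l j1 by (simp add: rev_nth)
  moreover have "rev Q ! Suc i = Q ! j" using l unfolding j_def by (simp add: rev_nth)
  ultimately show "F (rev Q ! i) (rev Q ! Suc i)" by simp
qed (use assms in \<open>auto simp: is_path_def\<close>)

lemma path_avoid:
  assumes "is_path W F Q" "l \<notin> set Q" shows "is_path (W - {l}) (induced F (W - {l})) Q"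
  unfolding is_path_def
proof (intro conjI allI impI)
  fix i assume i: "Suc i < length Q"
  then have "F (Q ! i) (Q ! Suc i)" using assms(1) unfolding is_path_def by blast
  moreover have "Q ! i \<in> set Q" "Q ! Suc i \<in> set Q" using i by auto
  ultimately show "induced F (W - {l}) (Q ! i) (Q ! Suc i)"
    using assms unfolding induced_def is_path_def by auto
qed (use assms in \<open>auto simp: is_path_def\<close>)

lemma path_endpoint:
  assumes "is_path W F Q" "l \<in> set Q" "\<forall>a b. F l a \<and> F l b \<longrightarrow> a = b"
    "\<forall>u v. F u v \<longrightarrow> F v u"
  shows "hd Q = l \<or> last Q = l"
proof (rule ccontr)
  assume nh: "\<not> (hd Q = l \<or> last Q = l)"
  obtain i where i: "i < length Q" "Q ! i = l" using assms(2) by (metis in_set_conv_nth)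
  have Qne: "Q \<noteq> []" using assms(2) by auto
  have "i \<noteq> 0"
  proof
    assume "i = 0" then show False using nh i Qne by (simp add: hd_conv_nth)
  qed
  moreover have "Suc i \<noteq> length Q"
  proof
    assume "Suc i = length Q"
    then have "length Q - 1 = i" by simp
    then have "last Q = Q ! i" using Qne last_conv_nth by metis
    then show False using nh i by simp
  qed
  ultimately obtain k where k: "i = Suc k" "Suc i < length Q" using i by (cases i) auto
  have "F (Q ! k) (Q ! i)" "F (Q ! i) (Q ! Suc i)" using assms(1) k unfolding is_path_def by auto
  then have "Q ! k = Q ! Suc i" using assms(3,4) i by metis
  moreover have "distinct Q" using assms(1) unfolding is_path_def by auto
  ultimately show False using k by (simp add: nth_eq_iff_index_eq)
qed

lemma strip_path:
  assumes "is_path W F Q" "l \<in> set Q" "\<forall>a b. F l a \<and> F l b \<longrightarrow> a = b"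
    "\<forall>u v. F u v \<longrightarrow> F v u" "length Q \<ge> 2"
  shows "is_path (W - {l}) (induced F (W - {l})) (filter (\<lambda>x. x \<noteq> l) Q)
     \<and> (\<exists>u. F l u \<and> u \<in> set (filter (\<lambda>x. x \<noteq> l) Q))"
proof -
  have key: "is_path (W - {l}) (induced F (W - {l})) (filter (\<lambda>x. x \<noteq> l) R)
     \<and> (\<exists>u. F l u \<and> u \<in> set (filter (\<lambda>x. x \<noteq> l) R))"
    if R: "is_path W F R" "hd R = l" "length R \<ge> 2" for R
  proof -
    have "R \<noteq> []" using R(3) by auto
    then obtain a R' where R1: "R = a # R'" by (meson list.exhaust)
    have R2: "R' \<noteq> []" using R(3) unfolding R1 by (cases R') auto
    have al: "a = l" using R(2) unfolding R1 by simp
    have dR: "distinct R" using R(1) unfolding is_path_def by blast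
    have d: "l \<notin> set R'" using dR unfolding R1 al by simp
    have d': "\<forall>x\<in>set R'. x \<noteq> l" using d by blast
    have f: "filter (\<lambda>x. x \<noteq> l) R = R'" unfolding R1 al using d' by simp
    have p: "is_path W F R'" using path_tl[of W F a R'] R(1) R1 R2 by simp
    have "Suc 0 < length R" using R(3) by simp
    then have "F (R ! 0) (R ! Suc 0)" using R(1) unfolding is_path_def by blast
    then have e: "F l (R' ! 0)" using R1 al by simp
    have "R' ! 0 \<in> set R'" using R2 by simp
    then show ?thesis unfolding f using path_avoid[OF p d] e by blast
  qed
  show ?thesis
  proof (cases "hd Q = l")
    case True show ?thesis using key[OF assms(1) True assms(5)] by blast
  next
    case False
    then have "last Q = l" using path_endpoint[OF assms(1-4)] by blast
    then have "hd (rev Q) = l" using assms(2) by (auto simp: hd_rev)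
    then have "is_path (W - {l}) (induced F (W - {l})) (filter (\<lambda>x. x \<noteq> l) (rev Q))
     \<and> (\<exists>u. F l u \<and> u \<in> set (filter (\<lambda>x. x \<noteq> l) (rev Q)))"
      using key[OF path_rev[OF assms(1) assms(4)]] assms(5) by simp
    moreover have "filter (\<lambda>x. x \<noteq> l) (rev Q) = rev (filter (\<lambda>x. x \<noteq> l) Q)" by (simp add: rev_filter)
    ultimately have A: "is_path (W - {l}) (induced F (W - {l})) (rev (filter (\<lambda>x. x \<noteq> l) Q))
     \<and> (\<exists>u. F l u \<and> u \<in> set (filter (\<lambda>x. x \<noteq> l) Q))" by simp
    have sy: "\<forall>u v. induced F (W - {l}) u v \<longrightarrow> induced F (W - {l}) v u"
      using assms(4) unfolding induced_def by blast
    have "is_path (W - {l}) (induced F (W - {l})) (rev (rev (filter (\<lambda>x. x \<noteq> l) Q)))"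
      using path_rev[OF conjunct1[OF A] sy] .
    then show ?thesis using A by simp
  qed
qed

lemma transfer:
  assumes ac: "anticomplete (induced F (W - {l})) (A - {l}) (B - {l})"
    and leaf: "\<forall>a b. F l a \<and> F l b \<longrightarrow> a = b"
    and hA: "l \<in> A \<Longrightarrow> \<exists>u. F l u \<and> u \<in> A - {l}"
    and hB: "l \<in> B \<Longrightarrow> \<exists>u. F l u \<and> u \<in> B - {l}"
    and sym: "\<forall>u v. F u v \<longrightarrow> F v u" and irr: "\<forall>v. \<not> F v v"
    and AW: "A \<subseteq> W" and BW: "B \<subseteq> W"
  shows "anticomplete F A B"
  unfolding anticomplete_def
proof (intro conjI ballI)
  have dis: "(A - {l}) \<inter> (B - {l}) = {}"
    using ac unfolding anticomplete_def by auto
  have ne: "\<And>a b. a \<in> A - {l} \<Longrightarrow> b \<in> B - {l} \<Longrightarrow> \<not> F a b"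
    using ac AW BW unfolding anticomplete_def induced_def by blast
  show "A \<inter> B = {}"
  proof (rule ccontr)
    assume "A \<inter> B \<noteq> {}"
    then obtain x where x: "x \<in> A" "x \<in> B" by blast
    show False
    proof (cases "x = l")
      case True
      then obtain u1 u2 where "F l u1" "u1 \<in> A - {l}" "F l u2" "u2 \<in> B - {l}" using hA hB x by blast
      then show False using leaf dis by blast
    next
      case False then show False using x dis by blast
    qed
  qed
  fix a b assume a: "a \<in> A" and b: "b \<in> B"
  show "\<not> F a b"
  proof
    assume ab: "F a b"
    have "a \<noteq> b" using ab irr by blast
    show False
    proof (cases "a = l")
      case True
      then obtain u1 where "F l u1" "u1 \<in> A - {l}" using hA a by blast
      moreover have "b \<noteq> l" using True \<open>a \<noteq> b\<close> by blast
      ultimately show False using leaf dis b ab True by blast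
    next
      case aF: False
      show False
      proof (cases "b = l")
        case True
        then obtain u2 where "F l u2" "u2 \<in> B - {l}" using hB b by blast
        moreover have "F l a" using ab True sym by blast
        ultimately show False using leaf dis a aF by blast
      next
        case False then show False using ne a b aF ab by blast
      qed
    qed
  qed
qed

lemma forest_sep:
  assumes "finite W" "\<forall>u v. F u v \<longrightarrow> F v u" "\<forall>v. \<not> F v v"
    "\<forall>u v. F u v \<longrightarrow> u \<in> W \<and> v \<in> W" "\<not> (\<exists>C. is_cycle W F C)"
    "\<P> \<noteq> {}" "\<forall>P\<in>\<P>. is_path W F P"
  shows "\<exists>P\<in>\<P>. \<exists>S. finite S \<and> card S \<le> 2 \<and>
           (\<forall>Q\<in>\<P>. set Q \<inter> S = {} \<longrightarrow> anticomplete F (set P) (set Q))"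
  using assms
proof (induction "card W" arbitrary: W F \<P> rule: less_induct)
  case less
  note fin = less.prems(1) and sym = less.prems(2) and irr = less.prems(3)
    and inW = less.prems(4) and acyc = less.prems(5) and ne = less.prems(6) and paths = less.prems(7)
  obtain P0 where P0: "P0 \<in> \<P>" using ne by blast
  have "W \<noteq> {}" using paths P0 unfolding is_path_def by (cases P0) auto
  then obtain l where lW: "l \<in> W" and leaf: "\<forall>a b. F l a \<and> F l b \<longrightarrow> a = b"
    using leaf_exists[OF fin _ sym irr inW acyc] by blast
  show ?case
  proof (cases "[l] \<in> \<P>")
    case True
    define S where "S = insert l {u. F l u}"
    have "{u. F l u} \<subseteq> W" using inW by blast
    then have fN: "finite {u. F l u}" using fin finite_subset by blast
    have "card {u. F l u} \<le> Suc 0" using fN leaf by (simp add: card_le_Suc0_iff_eq)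
    then have cS: "card S \<le> 2" unfolding S_def using fN
      by (simp add: card_insert_if)
    show ?thesis
    proof (intro bexI[OF _ True] exI[of _ S] conjI ballI impI)
      show "finite S" using fN S_def by simp
      show "card S \<le> 2" by (rule cS)
      fix Q assume "Q \<in> \<P>" "set Q \<inter> S = {}"
      then show "anticomplete F (set [l]) (set Q)" unfolding anticomplete_def S_def by auto
    qed
  next
    case False
    define g where "g = (\<lambda>Q. filter (\<lambda>x. x \<noteq> l) Q)"
    define W' where "W' = W - {l}"
    define F' where "F' = induced F W'"
    have sg: "set (g Q) = set Q - {l}" for Q unfolding g_def by auto
    have long: "length Q \<ge> 2" if "Q \<in> \<P>" "l \<in> set Q" for Q
    proof (rule ccontr)
      assume "\<not> length Q \<ge> 2"
      then have "length Q \<le> 1" by simp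
      then have "Q = [l]" using that(2) by (cases Q) auto
      then show False using False that(1) by simp
    qed
    have gp: "is_path W' F' (g Q) \<and> (l \<in> set Q \<longrightarrow> (\<exists>u. F l u \<and> u \<in> set Q - {l}))" if "Q \<in> \<P>" for Q
    proof (cases "l \<in> set Q")
      case True
      then show ?thesis using strip_path[OF paths[rule_format, OF that] True leaf sym long[OF that True]]
        unfolding g_def W'_def F'_def by auto
    next
      case False
      then have "\<forall>x\<in>set Q. x \<noteq> l" by blast
      then have "g Q = Q" unfolding g_def by simp
      then show ?thesis using path_avoid[OF paths[rule_format, OF that] False] False
        unfolding W'_def F'_def by simp
    qed
    have lt: "card W' < card W" unfolding W'_def by (rule card_Diff1_less[OF fin lW])
    have fin': "finite W'" unfolding W'_def using fin by simp
    have sym': "\<forall>u v. F' u v \<longrightarrow> F' v u" unfolding F'_def induced_def using sym by blast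
    have irr': "\<forall>v. \<not> F' v v" unfolding F'_def induced_def using irr by blast
    have inW': "\<forall>u v. F' u v \<longrightarrow> u \<in> W' \<and> v \<in> W'" unfolding F'_def induced_def by blast
    have acyc': "\<not> (\<exists>C. is_cycle W' F' C)"
    proof
      assume "\<exists>C. is_cycle W' F' C"
      then obtain C where "is_cycle W' F' C" by blast
      then have "is_cycle W F C" unfolding is_cycle_def F'_def induced_def W'_def by auto
      then show False using acyc by blast
    qed
    have ne': "g ` \<P> \<noteq> {}" using ne by blast
    have paths': "\<forall>P\<in>g ` \<P>. is_path W' F' P" using gp by blast
    obtain P' S where P': "P' \<in> g ` \<P>" and S: "finite S" "card S \<le> 2"
      and sep: "\<forall>Q\<in>g ` \<P>. set Q \<inter> S = {} \<longrightarrow> anticomplete F' (set P') (set Q)"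
      using less.hyps[OF lt fin' sym' irr' inW' acyc' ne' paths'] by blast
    obtain P where P: "P \<in> \<P>" "P' = g P" using P' by blast
    show ?thesis
    proof (intro bexI[OF _ P(1)] exI[of _ S] conjI ballI impI S)
      fix Q assume Q: "Q \<in> \<P>" "set Q \<inter> S = {}"
      then have "set (g Q) \<inter> S = {}" using sg by auto
      then have ac: "anticomplete F' (set P - {l}) (set Q - {l})" using sep Q(1) P(2) sg by auto
      show "anticomplete F (set P) (set Q)"
      proof (rule transfer[OF ac[unfolded F'_def W'_def] leaf _ _ sym irr])
        show "l \<in> set P \<Longrightarrow> \<exists>u. F l u \<and> u \<in> set P - {l}" using gp[OF P(1)] by blast
        show "l \<in> set Q \<Longrightarrow> \<exists>u. F l u \<and> u \<in> set Q - {l}" using gp[OF Q(1)] by blast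
        show "set P \<subseteq> W" using paths P(1) unfolding is_path_def by blast
        show "set Q \<subseteq> W" using paths Q(1) unfolding is_path_def by blast
      qed
    qed
  qed
qed



lemma cycle_mono:
  assumes "is_cycle V1 E1 C" "V1 \<subseteq> V2" "\<forall>u v. E1 u v \<longrightarrow> E2 u v"
  shows "is_cycle V2 E2 C"
  using assms unfolding is_cycle_def by blast

lemma path_mono:
  assumes "is_path V1 E1 C" "V1 \<subseteq> V2" "\<forall>u v. E1 u v \<longrightarrow> E2 u v"
  shows "is_path V2 E2 C"
  using assms unfolding is_path_def by blast

lemma ac_sym:
  assumes "anticomplete E A B" "\<forall>u v. E u v \<longrightarrow> E v u"
  shows "anticomplete E B A"
  using assms unfolding anticomplete_def by blast

lemma ac_mono:
  assumes "anticomplete E A B" "A' \<subseteq> A" "B' \<subseteq> B"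
  shows "anticomplete E A' B'"
  using assms unfolding anticomplete_def by blast

definition foot :: "('a \<Rightarrow> 'a \<Rightarrow> bool) \<Rightarrow> 'a set \<Rightarrow> 'a list \<Rightarrow> 'a" where
  "foot E Z Q = the_elem (feet E Z Q)"

definition pw :: "('a \<Rightarrow> 'a \<Rightarrow> bool) \<Rightarrow> 'a list list \<Rightarrow> bool" where
  "pw E Cs \<longleftrightarrow> (\<forall>i j. i < length Cs \<and> j < length Cs \<and> i \<noteq> j \<longrightarrow> anticomplete E (set (Cs ! i)) (set (Cs ! j)))"

context
  fixes s :: nat and V Z :: "'a set" and E :: "'a \<Rightarrow> 'a \<Rightarrow> bool"
  assumes s1: "s \<ge> 1" and pl: "plantation s V E Z" and mo: "monic V E Z"
begin

lemma gr: "graph V E" using pl unfolding plantation_def by blast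
lemma finV: "finite V" using gr unfolding graph_def by blast
lemma symE: "\<forall>u v. E u v \<longrightarrow> E v u" using gr unfolding graph_def by blast
lemma irrE: "\<forall>v. \<not> E v v" using gr unfolding graph_def by blast
lemma inV: "\<forall>u v. E u v \<longrightarrow> u \<in> V \<and> v \<in> V" using gr unfolding graph_def by blast
lemma ZV: "Z \<subseteq> V" using pl unfolding plantation_def cycle_hitting_def by blast
lemma hit: "is_cycle V E C \<Longrightarrow> set C \<inter> Z \<noteq> {}" using pl unfolding plantation_def cycle_hitting_def by blast
lemma sof: "sO_free s V E" using pl unfolding plantation_def by blast
lemma stab: "u \<in> Z \<Longrightarrow> v \<in> Z \<Longrightarrow> \<not> E u v" using mo unfolding monic_def by blast
lemma uniq: "v \<in> attach V E Z \<Longrightarrow> z1 \<in> Z \<Longrightarrow> E v z1 \<Longrightarrow> z2 \<in> Z \<Longrightarrow> E v z2 \<Longrightarrow> z1 = z2"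
  using mo unfolding monic_def by blast

lemma st_facts:
  assumes "self_transition V E Z Q"
  shows "foot E Z Q \<in> Z" "E (foot E Z Q) (hd Q)" "E (foot E Z Q) (last Q)" "set Q \<subseteq> V - Z"
    "length Q \<ge> 2" "is_path (V - Z) (induced E (V - Z)) Q"
    "\<And>v z. v \<in> set Q \<Longrightarrow> z \<in> Z \<Longrightarrow> E v z \<Longrightarrow> z = foot E Z Q"
proof -
  have T: "transition V E Z Q" and c1: "card (feet E Z Q) = 1"
    using assms unfolding self_transition_def by auto
  obtain f where ff: "feet E Z Q = {f}" using c1 by (rule card_1_singletonE)
  have fo: "foot E Z Q = f" unfolding foot_def ff by simp
  show P: "is_path (V - Z) (induced E (V - Z)) Q" and L: "length Q \<ge> 2"
    using T unfolding transition_def by auto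
  show SQ: "set Q \<subseteq> V - Z" using P unfolding is_path_def by blast
  have hA: "hd Q \<in> attach V E Z" and lA: "last Q \<in> attach V E Z"
    and int: "\<And>i. 0 < i \<Longrightarrow> Suc i < length Q \<Longrightarrow> Q ! i \<notin> attach V E Z"
    using T unfolding transition_def by auto
  have fh: "z = f" if "z \<in> Z" "E (hd Q) z" for z
  proof -
    have "z \<in> feet E Z Q" unfolding feet_def using that symE by blast
    then show ?thesis using ff by blast
  qed
  have fl: "z = f" if "z \<in> Z" "E (last Q) z" for z
  proof -
    have "z \<in> feet E Z Q" unfolding feet_def using that symE by blast
    then show ?thesis using ff by blast
  qed
  obtain z1 where z1: "z1 \<in> Z" "E (hd Q) z1" using hA unfolding attach_def by blast
  obtain z2 where z2: "z2 \<in> Z" "E (last Q) z2" using lA unfolding attach_def by blast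
  show "foot E Z Q \<in> Z" using z1 fh fo by blast
  show "E (foot E Z Q) (hd Q)" using z1 fh fo symE by blast
  show "E (foot E Z Q) (last Q)" using z2 fl fo symE by blast
  fix v z assume v: "v \<in> set Q" and z: "z \<in> Z" "E v z"
  have vA: "v \<in> attach V E Z" using v z SQ unfolding attach_def by blast
  obtain i where i: "i < length Q" "Q ! i = v" using v by (metis in_set_conv_nth)
  have Qne: "Q \<noteq> []" using L by auto
  show "z = foot E Z Q"
  proof (cases "i = 0")
    case True
    then have "v = hd Q" using i Qne by (simp add: hd_conv_nth)
    then show ?thesis using fh z fo by blast
  next
    case False
    show ?thesis
    proof (cases "Suc i = length Q")
      case True
      then have "length Q - 1 = i" by simp
      then have "v = last Q" using i Qne last_conv_nth by metis
      then show ?thesis using fl z fo by blast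
    next
      case False2: False
      then have "Suc i < length Q" using i by simp
      then have "v \<notin> attach V E Z" using int False i by blast
      then show ?thesis using vA by blast
    qed
  qed
qed

lemma st_cycle:
  assumes "self_transition V E Z Q"
  shows "is_cycle V E (foot E Z Q # Q)"
proof -
  note F = st_facts[OF assms]
  have Qne: "Q \<noteq> []" using F(5) by auto
  have dQ: "distinct Q" using F(6) unfolding is_path_def by blast
  have eQ: "\<And>i. Suc i < length Q \<Longrightarrow> E (Q ! i) (Q ! Suc i)"
    using F(6) unfolding is_path_def induced_def by blast
  show ?thesis unfolding is_cycle_def
  proof (intro conjI allI impI)
    show "3 \<le> length (foot E Z Q # Q)" using F(5) by simp
    show "distinct (foot E Z Q # Q)" using dQ F(1) F(4) by auto
    show "set (foot E Z Q # Q) \<subseteq> V" using F(1) F(4) ZV by auto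
    fix i assume i: "Suc i < length (foot E Z Q # Q)"
    show "E ((foot E Z Q # Q) ! i) ((foot E Z Q # Q) ! Suc i)"
    proof (cases i)
      case 0 then show ?thesis using F(2) Qne by (simp add: hd_conv_nth)
    next
      case (Suc j) then show ?thesis using eQ i by simp
    qed
  next
    show "E (last (foot E Z Q # Q)) (hd (foot E Z Q # Q))" using F(3) Qne symE by simp
  qed
qed

lemma forestF: "\<not> (\<exists>C. is_cycle (V - Z) (induced E (V - Z)) C)"
proof
  assume "\<exists>C. is_cycle (V - Z) (induced E (V - Z)) C"
  then obtain C where C: "is_cycle (V - Z) (induced E (V - Z)) C" by blast
  then have "is_cycle V E C" using cycle_mono[OF C] unfolding induced_def by blast
  moreover have "set C \<inter> Z = {}" using C unfolding is_cycle_def by blast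
  ultimately show False using hit by blast
qed

lemma extend:
  assumes ne: "\<exists>Q. self_transition V E Z Q \<and> set (foot E Z Q # Q) \<subseteq> H"
  shows "\<exists>P S. self_transition V E Z P \<and> set (foot E Z P # P) \<subseteq> H \<and> finite S \<and> card S \<le> 2 \<and>
   (\<forall>Q. self_transition V E Z Q \<and> set (foot E Z Q # Q) \<subseteq> H \<and> set Q \<inter> S = {} \<longrightarrow>
      anticomplete E (set P) (set Q))"
proof -
  define PP where "PP = {Q. self_transition V E Z Q \<and> set (foot E Z Q # Q) \<subseteq> H}"
  have a1: "finite (V - Z)" using finV by simp
  have a2: "\<forall>u v. induced E (V - Z) u v \<longrightarrow> induced E (V - Z) v u"
    using symE unfolding induced_def by blast
  have a3: "\<forall>v. \<not> induced E (V - Z) v v" using irrE unfolding induced_def by blast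
  have a4: "\<forall>u v. induced E (V - Z) u v \<longrightarrow> u \<in> V - Z \<and> v \<in> V - Z" unfolding induced_def by blast
  have a6: "PP \<noteq> {}" using ne unfolding PP_def by blast
  have a7: "\<forall>P\<in>PP. is_path (V - Z) (induced E (V - Z)) P" unfolding PP_def using st_facts(6) by blast
  obtain P S where P: "P \<in> PP" and S: "finite S" "card S \<le> 2"
    and sep: "\<forall>Q\<in>PP. set Q \<inter> S = {} \<longrightarrow> anticomplete (induced E (V - Z)) (set P) (set Q)"
    using forest_sep[OF a1 a2 a3 a4 forestF a6 a7] by blast
  show ?thesis
  proof (intro exI conjI allI impI)
    show "self_transition V E Z P" "set (foot E Z P # P) \<subseteq> H" using P unfolding PP_def by auto
    show "finite S" "card S \<le> 2" by (rule S(1), rule S(2))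
    fix Q assume Q: "self_transition V E Z Q \<and> set (foot E Z Q # Q) \<subseteq> H \<and> set Q \<inter> S = {}"
    then have "anticomplete (induced E (V - Z)) (set P) (set Q)" using sep unfolding PP_def by blast
    then show "anticomplete E (set P) (set Q)"
      using st_facts(4)[OF Q[THEN conjunct1]] st_facts(4)[of P] P unfolding PP_def anticomplete_def induced_def
      by blast
  qed
qed

lemma ext_list:
  assumes "\<forall>C\<in>set Cs. is_cycle V E C" "pw E Cs" "\<forall>C\<in>set Cs. anticomplete E (set C) H"
    "is_cycle V E C" "set C \<subseteq> H"
  shows "\<forall>C\<in>set (Cs @ [C]). is_cycle V E C" "pw E (Cs @ [C])"
proof -
  show "\<forall>C\<in>set (Cs @ [C]). is_cycle V E C" using assms(1,4) by auto
  have acC: "anticomplete E (set (Cs ! j)) (set C)" if "j < length Cs" for j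
    using assms(3) that ac_mono[of E _ H _ "set C"] assms(5) by (meson nth_mem order_refl)
  show "pw E (Cs @ [C])" unfolding pw_def
  proof (intro allI impI)
    fix i j assume ij: "i < length (Cs @ [C]) \<and> j < length (Cs @ [C]) \<and> i \<noteq> j"
    show "anticomplete E (set ((Cs @ [C]) ! i)) (set ((Cs @ [C]) ! j))"
    proof (cases "i < length Cs")
      case True
      show ?thesis
      proof (cases "j < length Cs")
        case True2: True
        then show ?thesis using True assms(2) ij unfolding pw_def by (simp add: nth_append)
      next
        case False
        then have "j = length Cs" using ij by simp
        then show ?thesis using True acC by (simp add: nth_append)
      qed
    next
      case False
      then have i: "i = length Cs" using ij by simp
      then have j: "j < length Cs" using ij by simp
      show ?thesis using i j ac_sym[OF acC[OF j] symE] by (simp add: nth_append)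
    qed
  qed
qed

lemma no_full:
  assumes "length Cs = s" "\<forall>C\<in>set Cs. is_cycle V E C" "pw E Cs"
  shows False
  using sof assms unfolding sO_free_def pw_def by metis

lemma key_sep:
  assumes P: "self_transition V E Z P" and Q: "self_transition V E Z Q"
    and ac: "anticomplete E (set P) (set Q)" and ft: "foot E Z Q \<noteq> foot E Z P"
    and w: "w \<in> set (foot E Z Q # Q)"
  shows "w \<notin> set (foot E Z P # P) \<and> (\<forall>c\<in>set (foot E Z P # P). \<not> E c w)"
proof -
  note FP = st_facts[OF P] and FQ = st_facts[OF Q]
  show ?thesis
  proof (cases "w = foot E Z Q")
    case True
    have "w \<notin> set P" using True FQ(1) FP(4) by blast
    moreover have "\<not> E c w" if "c \<in> set (foot E Z P # P)" for c
    proof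
      assume cw: "E c w"
      show False
      proof (cases "c = foot E Z P")
        case True
        then show False using stab[OF FP(1)] FQ(1) cw \<open>w = foot E Z Q\<close> by blast
      next
        case False
        then have "c \<in> set P" using that by simp
        then show False using FP(7)[of c w] cw FQ(1) \<open>w = foot E Z Q\<close> ft by metis
      qed
    qed
    ultimately show ?thesis using ft True by auto
  next
    case False
    then have wQ: "w \<in> set Q" using w by simp
    have wZ: "w \<notin> Z" using wQ FQ(4) by blast
    have "w \<notin> set P" using wQ ac unfolding anticomplete_def by blast
    moreover have "w \<noteq> foot E Z P" using wZ FP(1) by blast
    moreover have "\<not> E c w" if "c \<in> set (foot E Z P # P)" for c
    proof
      assume cw: "E c w"
      show False
      proof (cases "c = foot E Z P")
        case True
        then have "E w (foot E Z P)" using cw symE by blast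
        then show False using FQ(7)[OF wQ FP(1)] ft by simp
      next
        case False
        then have "c \<in> set P" using that by simp
        then show False using ac wQ cw unfolding anticomplete_def by blast
      qed
    qed
    ultimately show ?thesis by simp
  qed
qed

lemma rec_step:
  "\<forall>H Cs. H \<subseteq> V \<and> length Cs + n = s - 1 \<and> (\<forall>C\<in>set Cs. is_cycle V E C) \<and> pw E Cs
     \<and> (\<forall>C\<in>set Cs. anticomplete E (set C) H) \<longrightarrow>
   (\<exists>X Y. X \<subseteq> Z \<and> Y \<subseteq> V - Z \<and> card X \<le> n \<and> card Y \<le> 2 * n \<and>
     (\<forall>Q. self_transition V E Z Q \<and> set (foot E Z Q # Q) \<subseteq> H \<longrightarrow>
        set Q \<inter> Y \<noteq> {} \<or> foot E Z Q \<in> X))"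
proof (induction n)
  case 0
  show ?case
  proof (intro allI impI)
    fix H Cs
    assume inv: "H \<subseteq> V \<and> length Cs + 0 = s - 1 \<and> (\<forall>C\<in>set Cs. is_cycle V E C) \<and> pw E Cs
     \<and> (\<forall>C\<in>set Cs. anticomplete E (set C) H)"
    have none: "\<not> (\<exists>Q. self_transition V E Z Q \<and> set (foot E Z Q # Q) \<subseteq> H)"
    proof
      assume "\<exists>Q. self_transition V E Z Q \<and> set (foot E Z Q # Q) \<subseteq> H"
      then obtain P where P: "self_transition V E Z P" "set (foot E Z P # P) \<subseteq> H" by blast
      have i3: "\<forall>C\<in>set Cs. is_cycle V E C" and i4: "pw E Cs" and i5: "\<forall>C\<in>set Cs. anticomplete E (set C) H"
        using inv by blast+
      note L = ext_list[OF i3 i4 i5 st_cycle[OF P(1)] P(2)]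
      moreover have "length (Cs @ [foot E Z P # P]) = s" using inv s1 by simp
      ultimately show False using no_full by blast
    qed
    show "\<exists>X Y. X \<subseteq> Z \<and> Y \<subseteq> V - Z \<and> card X \<le> 0 \<and> card Y \<le> 2 * 0 \<and>
     (\<forall>Q. self_transition V E Z Q \<and> set (foot E Z Q # Q) \<subseteq> H \<longrightarrow>
        set Q \<inter> Y \<noteq> {} \<or> foot E Z Q \<in> X)"
      using none by (intro exI[of _ "{}"]) auto
  qed
next
  case (Suc n)
  show ?case
  proof (intro allI impI)
    fix H Cs
    assume inv: "H \<subseteq> V \<and> length Cs + Suc n = s - 1 \<and> (\<forall>C\<in>set Cs. is_cycle V E C) \<and> pw E Cs
     \<and> (\<forall>C\<in>set Cs. anticomplete E (set C) H)"
    show "\<exists>X Y. X \<subseteq> Z \<and> Y \<subseteq> V - Z \<and> card X \<le> Suc n \<and> card Y \<le> 2 * Suc n \<and>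
     (\<forall>Q. self_transition V E Z Q \<and> set (foot E Z Q # Q) \<subseteq> H \<longrightarrow>
        set Q \<inter> Y \<noteq> {} \<or> foot E Z Q \<in> X)"
    proof (cases "\<exists>Q. self_transition V E Z Q \<and> set (foot E Z Q # Q) \<subseteq> H")
      case False
      then show ?thesis by (intro exI[of _ "{}"]) auto
    next
      case True
      obtain P S where P: "self_transition V E Z P" "set (foot E Z P # P) \<subseteq> H"
        and S: "finite S" "card S \<le> 2"
        and sep: "\<forall>Q. self_transition V E Z Q \<and> set (foot E Z Q # Q) \<subseteq> H \<and> set Q \<inter> S = {} \<longrightarrow>
          anticomplete E (set P) (set Q)"
        using extend[OF True] by blast
      define C where "C = foot E Z P # P"
      define H' where "H' = {v \<in> H. v \<notin> set C \<and> (\<forall>c\<in>set C. \<not> E c v)}"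
      have i1: "H \<subseteq> V" and i3: "\<forall>C\<in>set Cs. is_cycle V E C" and i4: "pw E Cs"
        and i5: "\<forall>C\<in>set Cs. anticomplete E (set C) H" and i2: "length Cs + Suc n = s - 1"
        using inv by blast+
      note L = ext_list[OF i3 i4 i5 st_cycle[OF P(1)] P(2), folded C_def]
      have acH': "\<forall>C'\<in>set (Cs @ [C]). anticomplete E (set C') H'"
      proof
        fix C' assume "C' \<in> set (Cs @ [C])"
        then consider "C' \<in> set Cs" | "C' = C" by auto
        then show "anticomplete E (set C') H'"
        proof cases
          case 1
          have "anticomplete E (set C') H" using i5 1 by blast
          moreover have "H' \<subseteq> H" unfolding H'_def by blast
          ultimately show ?thesis using ac_mono by blast
        next
          case 2 then show ?thesis unfolding H'_def anticomplete_def by blast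
        qed
      qed
      have inv': "H' \<subseteq> V \<and> length (Cs @ [C]) + n = s - 1 \<and> (\<forall>C\<in>set (Cs @ [C]). is_cycle V E C)
          \<and> pw E (Cs @ [C]) \<and> (\<forall>C\<in>set (Cs @ [C]). anticomplete E (set C) H')"
      proof (intro conjI)
        show "H' \<subseteq> V" using i1 unfolding H'_def by blast
        show "length (Cs @ [C]) + n = s - 1" using i2 by simp
      qed (rule L(1), rule L(2), rule acH')
      obtain X' Y' where X': "X' \<subseteq> Z" and Y': "Y' \<subseteq> V - Z" and cX: "card X' \<le> n"
        and cY: "card Y' \<le> 2 * n"
        and prp: "\<forall>Q. self_transition V E Z Q \<and> set (foot E Z Q # Q) \<subseteq> H' \<longrightarrow>
          set Q \<inter> Y' \<noteq> {} \<or> foot E Z Q \<in> X'"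
        using Suc.IH[rule_format, OF inv'] by blast
      define X where "X = insert (foot E Z P) X'"
      define Y where "Y = (S \<inter> (V - Z)) \<union> Y'"
      have fX': "finite X'" using finite_subset[OF order_trans[OF X' ZV] finV] .
      have gX: "X \<subseteq> Z" unfolding X_def using X' st_facts(1)[OF P(1)] by blast
      have gY: "Y \<subseteq> V - Z" unfolding Y_def using Y' by blast
      have cXX: "card X \<le> Suc n" unfolding X_def using fX' cX by (simp add: card_insert_if)
      have "card (S \<inter> (V - Z)) \<le> 2" using S card_mono[OF S(1), of "S \<inter> (V - Z)"] by simp
      then have cYY: "card Y \<le> 2 * Suc n" unfolding Y_def using cY card_Un_le[of "S \<inter> (V - Z)" Y'] by simp
      have pQ: "set Q \<inter> Y \<noteq> {} \<or> foot E Z Q \<in> X"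
        if Q: "self_transition V E Z Q \<and> set (foot E Z Q # Q) \<subseteq> H" for Q
      proof (rule ccontr)
        assume nn: "\<not> (set Q \<inter> Y \<noteq> {} \<or> foot E Z Q \<in> X)"
        have QS: "set Q \<inter> S = {}" using nn st_facts(4)[of Q] Q unfolding Y_def by blast
        have ac: "anticomplete E (set P) (set Q)" using sep Q QS by blast
        have ft: "foot E Z Q \<noteq> foot E Z P" using nn unfolding X_def by blast
        have "set (foot E Z Q # Q) \<subseteq> H'"
        proof
          fix w assume w: "w \<in> set (foot E Z Q # Q)"
          then have "w \<in> H" using Q by blast
          moreover have "w \<notin> set C \<and> (\<forall>c\<in>set C. \<not> E c w)"
            unfolding C_def using key_sep[OF P(1) _ ac ft w] Q by blast
          ultimately show "w \<in> H'" unfolding H'_def by blast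
        qed
        then have "set Q \<inter> Y' \<noteq> {} \<or> foot E Z Q \<in> X'" using prp Q by simp
        then show False using nn unfolding X_def Y_def by blast
      qed
      show ?thesis
        apply (rule exI[of _ X])
        apply (rule exI[of _ Y])
        using gX gY cXX cYY pQ by blast
    qed
  qed
qed

lemma post:
  assumes XZ: "X \<subseteq> Z" and YV: "Y \<subseteq> V - Z"
    and pr: "\<forall>Q. self_transition V E Z Q \<and> set (foot E Z Q # Q) \<subseteq> V \<longrightarrow> set Q \<inter> Y \<noteq> {} \<or> foot E Z Q \<in> X"
  shows "plantation s (explode_delete V E Z X Y) (induced E (explode_delete V E Z X Y)) (Z - X)
    \<and> selfless (explode_delete V E Z X Y) (induced E (explode_delete V E Z X Y)) (Z - X)"
proof -
  define V' where "V' = explode_delete V E Z X Y"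
  define E' where "E' = induced E V'"
  define Z' where "Z' = Z - X"
  have V'V: "V' \<subseteq> V" unfolding V'_def explode_delete_def by blast
  have V'X: "V' \<inter> X = {}" unfolding V'_def explode_delete_def by blast
  have ZV': "Z' \<subseteq> V'" unfolding Z'_def V'_def explode_delete_def using ZV YV by blast
  have expl: "\<not> E z v" if "v \<in> V'" "v \<notin> Z" "z \<in> X" for v z
    using that unfolding V'_def explode_delete_def by blast
  have E'E: "\<forall>u v. E' u v \<longrightarrow> E u v" unfolding E'_def induced_def by blast
  have gr': "graph V' E'" unfolding graph_def E'_def induced_def
    using finite_subset[OF V'V finV] symE irrE by blast
  have cyc': "is_cycle V E C" if "is_cycle V' E' C" for C
    using cycle_mono[OF that V'V E'E] .
  have cycV': "set C \<subseteq> V'" if "is_cycle V' E' C" for C using that unfolding is_cycle_def by blast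
  have sof': "sO_free s V' E'"
    unfolding sO_free_def
  proof
    assume "\<exists>Cs. length Cs = s \<and> (\<forall>C\<in>set Cs. is_cycle V' E' C) \<and>
      (\<forall>i j. i < s \<and> j < s \<and> i \<noteq> j \<longrightarrow> anticomplete E' (set (Cs ! i)) (set (Cs ! j)))"
    then obtain Cs where Cs: "length Cs = s" "\<forall>C\<in>set Cs. is_cycle V' E' C"
      "\<forall>i j. i < s \<and> j < s \<and> i \<noteq> j \<longrightarrow> anticomplete E' (set (Cs ! i)) (set (Cs ! j))" by blast
    have "\<forall>C\<in>set Cs. is_cycle V E C" using Cs(2) cyc' by blast
    moreover have "\<forall>i j. i < s \<and> j < s \<and> i \<noteq> j \<longrightarrow> anticomplete E (set (Cs ! i)) (set (Cs ! j))"
    proof (intro allI impI)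
      fix i j assume ij: "i < s \<and> j < s \<and> i \<noteq> j"
      then have a: "anticomplete E' (set (Cs ! i)) (set (Cs ! j))" using Cs(3) by blast
      have "set (Cs ! i) \<subseteq> V'" "set (Cs ! j) \<subseteq> V'" using ij Cs(1) Cs(2) cycV' by (meson nth_mem)+
      then show "anticomplete E (set (Cs ! i)) (set (Cs ! j))"
        using a unfolding anticomplete_def E'_def induced_def by blast
    qed
    ultimately show False using sof Cs(1) unfolding sO_free_def by blast
  qed
  have hit': "cycle_hitting V' E' Z'"
    unfolding cycle_hitting_def
  proof (intro conjI allI impI)
    show "Z' \<subseteq> V'" by (rule ZV')
    fix C assume C: "is_cycle V' E' C"
    then obtain v where v: "v \<in> set C" "v \<in> Z" using hit[OF cyc'[OF C]] by blast
    then have "v \<in> V'" using cycV'[OF C] by blast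
    then have "v \<in> Z'" using v V'X unfolding Z'_def by blast
    then show "set C \<inter> Z' \<noteq> {}" using v by blast
  qed
  have att: "attach V' E' Z' = attach V E Z \<inter> V'"
  proof
    show "attach V' E' Z' \<subseteq> attach V E Z \<inter> V'"
      unfolding attach_def Z'_def E'_def induced_def using V'V V'X by blast
    show "attach V E Z \<inter> V' \<subseteq> attach V' E' Z'"
    proof
      fix v assume v: "v \<in> attach V E Z \<inter> V'"
      then obtain z where z: "z \<in> Z" "E v z" "v \<in> V'" "v \<notin> Z" unfolding attach_def by blast
      have "z \<notin> X" using expl[OF z(3) z(4)] z(2) symE by blast
      then have "z \<in> Z'" "z \<in> V'" using z(1) ZV' unfolding Z'_def by blast+
      then show "v \<in> attach V' E' Z'" unfolding attach_def E'_def induced_def Z'_def using z by blast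
    qed
  qed
  have sl: "selfless V' E' Z'"
    unfolding selfless_def
  proof
    assume "\<exists>Q. self_transition V' E' Z' Q"
    then obtain Q where Q: "self_transition V' E' Z' Q" by blast
    have T: "transition V' E' Z' Q" and c1: "card (feet E' Z' Q) = 1"
      using Q unfolding self_transition_def by auto
    have P': "is_path (V' - Z') (induced E' (V' - Z')) Q" and L: "length Q \<ge> 2"
      and hA: "hd Q \<in> attach V' E' Z'" and lA: "last Q \<in> attach V' E' Z'"
      and int: "\<And>i. 0 < i \<Longrightarrow> Suc i < length Q \<Longrightarrow> Q ! i \<notin> attach V' E' Z'"
      using T unfolding transition_def by auto
    have sub: "V' - Z' \<subseteq> V - Z" unfolding Z'_def using V'V V'X by blast
    have P: "is_path (V - Z) (induced E (V - Z)) Q"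
    proof (rule path_mono[OF P' sub])
      show "\<forall>u v. induced E' (V' - Z') u v \<longrightarrow> induced E (V - Z) u v"
        using sub unfolding induced_def E'_def by blast
    qed
    have QV': "set Q \<subseteq> V' - Z'" using P' unfolding is_path_def by blast
    have T0: "transition V E Z Q" unfolding transition_def
    proof (intro conjI allI impI)
      show "is_path (V - Z) (induced E (V - Z)) Q" by (rule P)
      show "2 \<le> length Q" by (rule L)
      show "hd Q \<in> attach V E Z" using hA att by blast
      show "last Q \<in> attach V E Z" using lA att by blast
      fix i assume i: "0 < i \<and> Suc i < length Q"
      then have "Q ! i \<in> V'" using QV' by (meson DiffD1 Suc_lessD nth_mem subsetD)
      then show "Q ! i \<notin> attach V E Z" using int[of i] i att by blast
    qed
    have Qne: "Q \<noteq> []" using L by auto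
    have hV: "hd Q \<in> V' - Z'" "last Q \<in> V' - Z'" using QV' hd_in_set[OF Qne] last_in_set[OF Qne] by blast+
    have hZ: "hd Q \<notin> Z" "last Q \<notin> Z" using hV V'X unfolding Z'_def by blast+
    have fe: "feet E' Z' Q = feet E Z Q"
    proof
      show "feet E' Z' Q \<subseteq> feet E Z Q" unfolding feet_def Z'_def E'_def induced_def by blast
      show "feet E Z Q \<subseteq> feet E' Z' Q"
      proof
        fix z assume z: "z \<in> feet E Z Q"
        then have zZ: "z \<in> Z" and ze: "E z (hd Q) \<or> E z (last Q)" unfolding feet_def by auto
        have "z \<notin> X" using ze expl hV hZ by blast
        then have "z \<in> Z'" "z \<in> V'" using zZ ZV' unfolding Z'_def by blast+
        then show "z \<in> feet E' Z' Q" using ze hV unfolding feet_def E'_def induced_def by blast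
      qed
    qed
    have ST: "self_transition V E Z Q" unfolding self_transition_def using T0 c1 fe by simp
    have "foot E Z Q \<in> feet E Z Q"
    proof -
      obtain f where "feet E Z Q = {f}" using c1 fe by (metis card_1_singletonE)
      then show ?thesis unfolding foot_def by simp
    qed
    then have fZ': "foot E Z Q \<in> Z'" using fe unfolding feet_def by blast
    have "set (foot E Z Q # Q) \<subseteq> V" using fZ' ZV' V'V QV' by auto
    then have "set Q \<inter> Y \<noteq> {} \<or> foot E Z Q \<in> X" using pr ST by blast
    moreover have "set Q \<inter> Y = {}" using QV' unfolding V'_def explode_delete_def by blast
    ultimately show False using fZ' unfolding Z'_def by blast
  qed
  show ?thesis using gr' sof' hit' sl unfolding plantation_def V'_def E'_def Z'_def by blast
qed

end

theorem mainTheorem9: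
  fixes s :: nat and V Z :: "'a set" and E :: "'a \<Rightarrow> 'a \<Rightarrow> bool"
  assumes "s \<ge> 1"
    and "plantation s V E Z"
    and "monic V E Z"
  shows "\<exists>X Y. X \<subseteq> Z \<and> Y \<subseteq> V - Z \<and> card X < s \<and> card Y < 2 * s * fact s
    \<and> (let V' = explode_delete V E Z X Y in
         plantation s V' (induced E V') (Z - X) \<and> selfless V' (induced E V') (Z - X))"
proof -
  have init: "V \<subseteq> V \<and> length ([] :: 'a list list) + (s - 1) = s - 1 \<and> (\<forall>C\<in>set ([] :: 'a list list). is_cycle V E C)
     \<and> pw E ([] :: 'a list list) \<and> (\<forall>C\<in>set ([] :: 'a list list). anticomplete E (set C) V)"
    by (simp add: pw_def)
  obtain X Y where X: "X \<subseteq> Z" and Y: "Y \<subseteq> V - Z" and cX: "card X \<le> s - 1" and cY: "card Y \<le> 2 * (s - 1)"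
    and pr: "\<forall>Q. self_transition V E Z Q \<and> set (foot E Z Q # Q) \<subseteq> V \<longrightarrow> set Q \<inter> Y \<noteq> {} \<or> foot E Z Q \<in> X"
    using rec_step[OF assms, of "s - 1", rule_format, OF init] by blast
  have c1: "card X < s" using cX assms(1) by simp
  have "(1::nat) \<le> fact s" by (rule fact_ge_1)
  then have "2 * s \<le> 2 * s * fact s" by simp
  moreover have "card Y < 2 * s" using cY assms(1) by simp
  ultimately have c2: "card Y < 2 * s * fact s" by (rule order_less_le_trans[rotated])
  have "plantation s (explode_delete V E Z X Y) (induced E (explode_delete V E Z X Y)) (Z - X)
    \<and> selfless (explode_delete V E Z X Y) (induced E (explode_delete V E Z X Y)) (Z - X)"
    using post[OF assms X Y pr] .
  then show ?thesis using X Y c1 c2 unfolding Let_def by blast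
qed

end
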